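(* Let $\sqrt{2} = (1.b_1 b_2 b_3 \cdots)_2$ be the binary expansion of $\sqrt 2$ and $b = b_1 b_2 b_3 \cdots$ the infinite binary word of its fractional digits. For integers $n \geq 2$, let $L_n(x) = \left\lfloor \frac{x(2^n - x)}{2^{n-2}} \right\rfloor$ for $x \in X_n = \{1, 2, \dots, 2^n - 1\}$, and call $n$ undesirable if there exists $x \in X_n$ with $L_n(x) = 2^{n-1}$. Let $d_N$ be the number of undesirable parameters $n$ with $2 \le n \leq N$. Then $$\liminf_{N \to \infty} \frac{d_N}{N} \geq \frac{5 r_{\inf}(b) - 2}{3} \quad\text{and}\quad \limsup_{N \to \infty} \frac{d_N}{N} \geq \frac{5 r_{\sup}(b) - 2}{3},$$ where $r_{\inf}(b) = \liminf_{n\to\infty} |Z(b^{(n)})|/n$ and $r_{\sup}(b) = \limsup_{n\to\infty} |Z(b^{(n)})|/n$. In particular, if $r_{\sup}(b) > 2/5$, then there are infinitely many undesirable parameters.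
   Context: For a binary word $w = w_1 w_2 \cdots$, $w^{(n)}$ denotes its initial subword of length $n$, and $Z(w)$ is the set of indices $i$ with $w_i = 0$; thus $|Z(b^{(n)})|$ is the number of zeros among $b_1, \dots, b_n$. *)

theory Defs
  imports Complex_Main "HOL-Library.Liminf_Limsup" "HOL-Library.Extended_Real"
begin

text \<open>i-th binary digit (i \<ge> 1) after the binary point of sqrt 2: b_i.\<close>
definition sqrt2_digit :: "nat \<Rightarrow> nat" where
  "sqrt2_digit i = nat \<lfloor>sqrt 2 * 2 ^ i\<rfloor> mod 2"

definition zeros_count :: "nat \<Rightarrow> nat" where
  "zeros_count n = card {i \<in> {1..n}. sqrt2_digit i = 0}"

definition L_fun :: "nat \<Rightarrow> nat \<Rightarrow> int" where
  "L_fun n x = \<lfloor>real x * (2 ^ n - real x) / 2 ^ (n - 2)\<rfloor>"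

definition undesirable :: "nat \<Rightarrow> bool" where
  "undesirable n \<longleftrightarrow> n \<ge> 2 \<and> (\<exists>x \<in> {1..2 ^ n - 1}. L_fun n x = 2 ^ (n - 1))"

definition d_count :: "nat \<Rightarrow> nat" where
  "d_count N = card {n \<in> {2..N}. undesirable n}"

definition r_inf :: ereal where
  "r_inf = liminf (\<lambda>n. ereal (real (zeros_count n) / real n))"

definition r_sup :: ereal where
  "r_sup = limsup (\<lambda>n. ereal (real (zeros_count n) / real n))"

end

theory Submission
  imports Defs
begin


definition good :: "(nat\<Rightarrow>nat) \<Rightarrow> nat \<Rightarrow> bool" where
 "good b i = (b i = 0 \<and> (b(i+1)=0 \<or> (b(i+1)=1 \<and> b(i+2)=0 \<and> b(i+3)=0)
     \<or> (b(i+1)=1 \<and> b(i+2)=0 \<and> b(i+3)=1 \<and> b(i+4)=0)))"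
definition bad :: "(nat\<Rightarrow>nat) \<Rightarrow> nat \<Rightarrow> bool" where
 "bad b i = (b i = 0 \<and> \<not> good b i)"
definition pA :: "(nat\<Rightarrow>nat) \<Rightarrow> nat \<Rightarrow> bool" where
 "pA b i = (b i = 0 \<and> b(i+1)=1 \<and> b(i+2)=1)"
definition pB :: "(nat\<Rightarrow>nat) \<Rightarrow> nat \<Rightarrow> bool" where
 "pB b i = (b i = 0 \<and> b(i+1)=1 \<and> b(i+2)=0 \<and> b(i+3)=1 \<and> b(i+4)=1)"

lemma bit_cases: "(b::nat) \<le> 1 \<Longrightarrow> b = 0 \<or> b = 1" by auto

lemma L1:
  assumes "\<forall>i. b i \<le> (1::nat)"
  shows "3 * of_bool(bad b i) = 2*of_bool(bad b i) + of_bool(pA b i) + (of_bool(pB b i)::nat)"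
  using bit_cases[of "b i"] bit_cases[of "b (i+1)"] bit_cases[of "b (i+2)"]
     bit_cases[of "b (i+3)"] bit_cases[of "b (i+4)"] assms
  unfolding bad_def good_def pA_def pB_def by auto

lemma L2:
  assumes "\<forall>i. b i \<le> (1::nat)"
  shows "2*of_bool(bad b (m+3)) + of_bool(pA b (m+2)) + of_bool(pB b m) \<le> 2 * (of_bool(b(m+4) = 1)::nat)"
  using bit_cases[of "b m"] bit_cases[of "b (m+1)"] bit_cases[of "b (m+2)"]
     bit_cases[of "b (m+3)"] bit_cases[of "b (m+4)"] bit_cases[of "b (m+5)"]
     bit_cases[of "b (m+6)"] bit_cases[of "b (m+7)"] assms
  unfolding bad_def good_def pA_def pB_def by (auto simp: numeral_eq_Suc)

lemma shift_le:
  fixes f :: "nat \<Rightarrow> nat"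
  assumes "\<forall>i. f i \<le> c"
  shows "(\<Sum>i<M. f i) \<le> k*c + (\<Sum>i<M. f (i+k))"
proof (induction k)
  case 0 then show ?case by simp
next
  case (Suc k)
  have "(\<Sum>i<M. f (i+k)) \<le> (\<Sum>i<Suc M. f (i+k))" by simp
  also have "\<dots> = f k + (\<Sum>i<M. f (i+Suc k))"
    by (subst sum.lessThan_Suc_shift) simp
  also have "\<dots> \<le> c + (\<Sum>i<M. f (i+Suc k))" using assms by simp
  finally show ?case using Suc by simp
qed

lemma shift_le2:
  fixes g :: "nat \<Rightarrow> nat"
  shows "(\<Sum>i<M. g (i+k)) \<le> (\<Sum>i<M+k. g i)"
proof (induction k arbitrary: M)
  case 0 then show ?case by simp
next
  case (Suc k)
  have "(\<Sum>i<M. g (i+Suc k)) \<le> g k + (\<Sum>i<M. g (Suc i+k))" by simp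
  also have "\<dots> = (\<Sum>i<Suc M. g (i+k))"
    by (subst sum.lessThan_Suc_shift) simp
  also have "\<dots> \<le> (\<Sum>i<Suc M+k. g i)" by (rule Suc)
  finally show ?case by simp
qed

lemma bad_sum:
  assumes b: "\<forall>i. b i \<le> (1::nat)"
  shows "3 * (\<Sum>i<M. of_bool(bad b i)) \<le> 8 + 2 * (\<Sum>i<M+4. (of_bool(b i = 1)::nat))"
proof -
  have e1: "3 * (\<Sum>i<M. (of_bool(bad b i)::nat)) = (\<Sum>i<M. 2*of_bool(bad b i)) + (\<Sum>i<M. of_bool(pA b i)) + (\<Sum>i<M. of_bool(pB b i))"
    using L1[OF b] by (simp only: sum_distrib_left sum.distrib)
  have e2: "(\<Sum>i<M. 2*of_bool(bad b i)) \<le> 3*2 + (\<Sum>i<M. 2*(of_bool(bad b (i+3))::nat))"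
    by (rule shift_le) simp
  have e3: "(\<Sum>i<M. of_bool(pA b i)) \<le> 2*1 + (\<Sum>i<M. (of_bool(pA b (i+2))::nat))"
    by (rule shift_le) simp
  have e4: "(\<Sum>i<M. 2*(of_bool(bad b (i+3))::nat)) + (\<Sum>i<M. (of_bool(pA b (i+2))::nat)) + (\<Sum>i<M. of_bool(pB b i))
     = (\<Sum>i<M. 2*of_bool(bad b (i+3)) + of_bool(pA b (i+2)) + of_bool(pB b i))"
    by (simp only: sum.distrib)
  have e5: "(\<Sum>i<M. 2*of_bool(bad b (i+3)) + of_bool(pA b (i+2)) + of_bool(pB b i)) \<le> (\<Sum>i<M. 2 * (of_bool(b(i+4) = 1)::nat))"
    by (rule sum_mono) (rule L2[OF b])
  have e6: "(\<Sum>i<M. 2 * (of_bool(b(i+4) = 1)::nat)) \<le> 2 * (\<Sum>i<M+4. (of_bool(b i = 1)::nat))"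
    using shift_le2[where g="\<lambda>i. of_bool(b i = 1)" and M=M and k=4]
    by (simp only: sum_distrib_left[symmetric])
  show ?thesis using e1 e2 e3 e4 e5 e6 by linarith
qed



definition G :: "nat \<Rightarrow> real" where "G k = frac (sqrt 2 * 2^k)"

lemma G_bounds: "0 \<le> G k" "G k < 1"
  unfolding G_def by (auto simp: frac_lt_1)

lemma digit_rec:
  "sqrt2_digit (Suc k) = (if G k < 1/2 then 0 else 1) \<and> G (Suc k) = 2 * G k - real (sqrt2_digit (Suc k))"
proof -
  define t where "t = sqrt 2 * 2^k"
  define a where "a = \<lfloor>t\<rfloor>"
  have tpos: "t > 0" unfolding t_def by simp
  have a0: "a \<ge> 0" unfolding a_def using tpos by simp
  have Gk: "G k = t - a" unfolding G_def t_def a_def frac_def by simp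
  have t2: "sqrt 2 * 2 ^ Suc k = 2 * t" unfolding t_def by simp
  show ?thesis
  proof (cases "G k < 1/2")
    case True
    have "\<lfloor>2*t\<rfloor> = 2*a" using True Gk G_bounds[of k] by (intro floor_unique) auto
    moreover have "nat (2*a) mod 2 = 0" using a0 by (simp add: nat_mult_distrib)
    ultimately have d: "sqrt2_digit (Suc k) = 0" unfolding sqrt2_digit_def t2 by simp
    have "G (Suc k) = 2*t - \<lfloor>2*t\<rfloor>" unfolding G_def frac_def t2 by simp
    with \<open>\<lfloor>2*t\<rfloor> = 2*a\<close> Gk d True show ?thesis by simp
  next
    case False
    have "\<lfloor>2*t\<rfloor> = 2*a+1" using False Gk G_bounds[of k] by (intro floor_unique) auto
    moreover have "nat (2*a+1) mod 2 = 1" using a0 by (simp add: nat_add_distrib nat_mult_distrib)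
    ultimately have d: "sqrt2_digit (Suc k) = 1" unfolding sqrt2_digit_def t2 by simp
    have "G (Suc k) = 2*t - \<lfloor>2*t\<rfloor>" unfolding G_def frac_def t2 by simp
    with \<open>\<lfloor>2*t\<rfloor> = 2*a+1\<close> Gk d False show ?thesis by simp
  qed
qed

lemma digit_le1: "sqrt2_digit i \<le> 1"
  unfolding sqrt2_digit_def by simp

lemma digit0: "sqrt2_digit 0 = 1"
proof -
  have "\<lfloor>sqrt 2\<rfloor> = 1"
  proof (intro floor_unique)
    show "real_of_int 1 \<le> sqrt 2" by simp
    have "sqrt 2 < sqrt (2^2)" by (intro real_sqrt_less_mono) simp
    then show "sqrt 2 < real_of_int 1 + 1" by simp
  qed
  then show ?thesis unfolding sqrt2_digit_def by simp
qed

lemma Gdown: "G k = (real (sqrt2_digit (Suc k)) + G (Suc k)) / 2"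
  using digit_rec[of k] by simp

lemma undesirable_of_G:
  assumes f: "G k < 11/32"
  shows "undesirable (k+2)"
proof -
  define P :: real where "P = 2^k"
  define t where "t = sqrt 2 * P"
  define s where "s = \<lfloor>t\<rfloor>"
  have P0: "P > 0" unfolding P_def by simp
  have sq2: "sqrt 2 * sqrt 2 = 2" by simp
  have sq2b: "sqrt 2 < 16/11"
  proof -
    have "sqrt 2 < sqrt ((16/11)^2)" by (intro real_sqrt_less_mono) (simp add: power2_eq_square)
    then show ?thesis by simp
  qed
  have sq2c: "sqrt 2 > 1" by simp
  have tpos: "t > 0" unfolding t_def using P0 by simp
  have s0: "s \<ge> 0" unfolding s_def using tpos by simp
  have fdef: "G k = t - s" unfolding G_def t_def s_def P_def frac_def by simp
  have st: "s \<le> t" unfolding s_def by simp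
  have tlt: "t < 2*P" unfolding t_def using P0 sq2b by simp
  have slt: "s < 2 * 2^k"
  proof -
    have "real_of_int s < real_of_int (2 * 2^k)" using st tlt P_def by simp
    then show ?thesis by (simp only: of_int_less_iff)
  qed
  define x where "x = nat (2 * 2^k - s)"
  have xr: "real x = 2*P - s" unfolding x_def P_def using slt by simp
  have x1: "x \<in> {1..2^(k+2) - 1}"
  proof -
    have "x \<ge> 1" unfolding x_def using slt by simp
    moreover have "x \<le> 2 * 2^k" unfolding x_def using s0 by (simp add: nat_le_iff)
    moreover have "(2::nat) * 2^k \<le> 2^(k+2) - 1"
    proof -
      have "(1::nat) \<le> 2^k" by simp
      then show ?thesis by (simp add: power_add)
    qed
    ultimately show ?thesis by simp
  qed
  have tt: "t*t = 2*P*P" unfolding t_def using sq2 by (simp add: algebra_simps)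
  have ss_le: "real_of_int s * s \<le> t*t" using st s0 by (intro mult_mono) auto
  have key: "2*t*(t - s) < P"
  proof -
    have "2*t*(t-s) < 2*t*(11/32)" using fdef f tpos by simp
    also have "\<dots> = sqrt 2 * 11/16 * P" unfolding t_def by simp
    also have "\<dots> < P" using sq2b P0 by simp
    finally show ?thesis .
  qed
  have ss_ge: "real_of_int s * s > t*t - P"
  proof -
    have "real_of_int s * s = t*t - 2*t*(t-s) + (t-s)*(t-s)" by (simp add: algebra_simps)
    moreover have "(t-s)*(t-s) \<ge> 0" by simp
    ultimately show ?thesis using key by linarith
  qed
  have val: "real x * (2 ^ (k+2) - real x) / 2 ^ (k+2-2) = 4*P - s*s/P"
    using P0 unfolding xr P_def by (simp add: power_add field_simps)
  have "L_fun (k+2) x = 2^(k+2-1)"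
  proof -
    have "L_fun (k+2) x = \<lfloor>4*P - s*s/P\<rfloor>" unfolding L_fun_def val by simp
    also have "\<dots> = 2 * 2^k"
    proof (intro floor_unique)
      have "s*s/P \<le> 2*P" using ss_le tt P0 by (simp add: field_simps)
      then show "real_of_int (2 * 2^k) \<le> 4*P - s*s/P" unfolding P_def by simp
      have "s*s/P > 2*P - 1" using ss_ge tt P0 by (simp add: field_simps)
      then show "4*P - s*s/P < real_of_int (2 * 2^k) + 1" unfolding P_def by simp
    qed
    finally show ?thesis by simp
  qed
  then show ?thesis unfolding undesirable_def using x1 by (intro conjI bexI[of _ x]) auto
qed



abbreviation "bb \<equiv> sqrt2_digit"

lemma good_G:
  assumes "good bb (Suc k)"
  shows "G k < 11/32"
proof -
  have d: "\<And>i. bb i = 0 \<or> bb i = 1" using digit_le1 bit_cases by blast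
  note g = Gdown[of k] Gdown[of "k+1"] Gdown[of "k+2"] Gdown[of "k+3"] Gdown[of "k+4"]
     G_bounds[of "k+1"] G_bounds[of "k+2"] G_bounds[of "k+3"] G_bounds[of "k+4"] G_bounds[of "k+5"]
  from assms show ?thesis unfolding good_def
  proof (elim conjE disjE)
    assume "bb (Suc k) = 0" "bb (Suc k + 1) = 0"
    then show ?thesis using g by simp
  next
    assume "bb (Suc k) = 0" "bb (Suc k + 1) = 1" "bb (Suc k + 2) = 0" "bb (Suc k + 3) = 0"
    then show ?thesis using g by (simp add: numeral_eq_Suc)
  next
    assume "bb (Suc k) = 0" "bb (Suc k + 1) = 1" "bb (Suc k + 2) = 0" "bb (Suc k + 3) = 1" "bb (Suc k + 4) = 0"
    then show ?thesis using g by (simp add: numeral_eq_Suc)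
  qed
qed

lemma count_ineq:
  "3 * real (d_count N) \<ge> 5 * real (zeros_count N) - 2 * real N - 19"
proof -
  have b1: "\<forall>i. bb i \<le> 1" using digit_le1 by blast
  define Gs where "Gs = (\<Sum>i<N. (of_bool (good bb i)::nat))"
  define Bs where "Bs = (\<Sum>i<N. (of_bool (bad bb i)::nat))"
  define ZN where "ZN = (\<Sum>i<N. (of_bool (bb i = 0)::nat))"
  define Z4 where "Z4 = (\<Sum>i<N+4. (of_bool (bb i = 0)::nat))"
  define O4 where "O4 = (\<Sum>i<N+4. (of_bool (bb i = 1)::nat))"
  define Z1 where "Z1 = (\<Sum>i<N+1. (of_bool (bb i = 0)::nat))"
  have a: "Gs \<le> d_count N"
  proof -
    have "Gs = card ({..<N} \<inter> {i. good bb i})" unfolding Gs_def by simp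
    also have "\<dots> = card (Suc ` ({..<N} \<inter> {i. good bb i}))" by (simp add: card_image)
    also have "\<dots> \<le> d_count N" unfolding d_count_def
    proof (rule card_mono)
      show "finite {n \<in> {2..N}. undesirable n}" by simp
      show "Suc ` ({..<N} \<inter> {i. good bb i}) \<subseteq> {n \<in> {2..N}. undesirable n}"
      proof
        fix n assume "n \<in> Suc ` ({..<N} \<inter> {i. good bb i})"
        then obtain i where i: "n = Suc i" "i < N" "good bb i" by auto
        have "bb i = 0" using i(3) unfolding good_def by simp
        have "i \<noteq> 0"
        proof
          assume "i = 0"
          with \<open>bb i = 0\<close> digit0 show False by simp
        qed
        then obtain k where k: "i = Suc k" by (cases i) auto
        have "undesirable (k+2)" using undesirable_of_G good_G i(3) k by simp
        then show "n \<in> {n \<in> {2..N}. undesirable n}" using i k by simp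
      qed
    qed
    finally show ?thesis .
  qed
  have b: "ZN = Gs + Bs" unfolding ZN_def Gs_def Bs_def sum.distrib[symmetric]
    by (rule sum.cong) (auto simp: bad_def good_def)
  have c: "3 * Bs \<le> 8 + 2 * O4" unfolding Bs_def O4_def by (rule bad_sum[OF b1])
  have dd: "O4 + Z4 = N + 4"
  proof -
    have "O4 + Z4 = (\<Sum>i<N+4. (1::nat))" unfolding O4_def Z4_def sum.distrib[symmetric]
      using b1 by (intro sum.cong) (auto simp: le_Suc_eq dest: spec)
    then show ?thesis by simp
  qed
  have e1: "Z1 \<le> Z4" unfolding Z1_def Z4_def by (rule sum_mono2) auto
  have e2: "Z1 \<le> ZN + 1" unfolding Z1_def ZN_def by simp
  have e3: "zeros_count N = Z1"
  proof -
    have "{i \<in> {1..N}. bb i = 0} = {..<N+1} \<inter> {i. bb i = 0}"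
      using digit0 by (auto simp: Suc_le_eq intro!: gr0I)
    then show ?thesis unfolding zeros_count_def Z1_def
      by (subst sum_of_bool_eq) auto
  qed
  show ?thesis using a b c dd e1 e2 e3 by linarith
qed



lemma large_N:
  assumes "e > (0::real)"
  shows "eventually (\<lambda>N::nat. 19 / real N < e \<and> N > 0) sequentially"
proof -
  obtain n0 :: nat where n0: "real n0 > 19 / e" using reals_Archimedean2 by blast
  have "eventually (\<lambda>N. N \<ge> Suc n0) sequentially" by (rule eventually_ge_at_top)
  then show ?thesis
  proof (rule eventually_mono)
    fix N assume N: "Suc n0 \<le> N"
    then have NN: "real N > 19/e" using n0 by linarith
    have Np: "real N > 0" using N by simp
    have "19 < e*real N" using NN assms by (simp add: field_simps)
    then have "19 / real N < e" using Np by (simp add: field_simps)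
    then show "19 / real N < e \<and> N > 0" using N by simp
  qed
qed

lemma liminf_part:
  fixes X Y :: "nat \<Rightarrow> real"
  assumes H: "\<And>N. N > 0 \<Longrightarrow> 3 * X N \<ge> 5 * Y N - 2 - 19 / real N"
  and L: "liminf (\<lambda>N. ereal (Y N)) = ereal r"
  shows "ereal ((5*r-2)/3) \<le> liminf (\<lambda>N. ereal (X N))"
proof (subst le_Liminf_iff, intro allI impI)
  fix y assume "y < ereal ((5*r-2)/3)"
  then obtain y0 where y0: "y < ereal y0" "y0 < (5*r-2)/3" using ereal_dense2 by force
  define e where "e = (5*r-2)/3 - y0"
  have e0: "e > 0" using y0 unfolding e_def by simp
  define r' where "r' = (3*y0+3*e/2+2)/5"
  have r5: "5*r' = 3*y0+3*e/2+2" unfolding r'_def by simp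
  have "r' < r" unfolding r'_def e_def using e0 e_def by (simp add: field_simps)
  then have "ereal r' < liminf (\<lambda>N. ereal (Y N))" unfolding L by simp
  then have ev1: "eventually (\<lambda>N. ereal r' < ereal (Y N)) sequentially" by (rule less_LiminfD)
  have "eventually (\<lambda>N. ereal r' < ereal (Y N) \<and> (19 / real N < 3*e/2 \<and> N > 0)) sequentially"
    using e0 by (intro eventually_conj[OF ev1 large_N]) simp
  then show "eventually (\<lambda>N. y < ereal (X N)) sequentially"
  proof (rule eventually_mono)
    fix N assume A: "ereal r' < ereal (Y N) \<and> (19 / real N < 3*e/2 \<and> N > 0)"
    then have "r' < Y N" by simp
    moreover have "3 * X N \<ge> 5 * Y N - 2 - 19 / real N" using H A by simp
    moreover have "19 / real N < 3*e/2" using A by simp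
    ultimately have "X N > y0" using r5 by linarith
    then have "ereal y0 < ereal (X N)" by simp
    then show "y < ereal (X N)" using y0(1) by (meson less_trans)
  qed
qed

lemma limsup_part:
  fixes X Y :: "nat \<Rightarrow> real"
  assumes H: "\<And>N. N > 0 \<Longrightarrow> 3 * X N \<ge> 5 * Y N - 2 - 19 / real N"
  and L: "limsup (\<lambda>N. ereal (Y N)) = ereal r"
  shows "ereal ((5*r-2)/3) \<le> limsup (\<lambda>N. ereal (X N))"
proof (rule ccontr)
  assume "\<not> ?thesis"
  then have "limsup (\<lambda>N. ereal (X N)) < ereal ((5*r-2)/3)" by simp
  then obtain y0 where y0: "limsup (\<lambda>N. ereal (X N)) < ereal y0" "y0 < (5*r-2)/3" using ereal_dense2 by force
  have ev1: "eventually (\<lambda>N. ereal (X N) < ereal y0) sequentially" using y0(1) by (rule Limsup_lessD)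
  define r' where "r' = (3*y0+2)/5"
  have r5: "5*r' = 3*y0+2" unfolding r'_def by simp
  define e where "e = r - r'"
  have e0: "e > 0" using y0 unfolding e_def r'_def by simp
  have "eventually (\<lambda>N. ereal (X N) < ereal y0 \<and> (19 / real N < e \<and> N > 0)) sequentially"
    using e0 by (intro eventually_conj[OF ev1 large_N]) simp
  then have "eventually (\<lambda>N. ereal (Y N) \<le> ereal (r' + e/2)) sequentially"
  proof (rule eventually_mono)
    fix N assume A: "ereal (X N) < ereal y0 \<and> (19 / real N < e \<and> N > 0)"
    then have "X N < y0" by simp
    moreover have "3 * X N \<ge> 5 * Y N - 2 - 19 / real N" using H A by simp
    moreover have "19 / real N < e" using A by simp
    ultimately have "Y N \<le> r' + e/2" using r5 e0 by linarith
    then show "ereal (Y N) \<le> ereal (r' + e/2)" by simp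
  qed
  then have "limsup (\<lambda>N. ereal (Y N)) \<le> ereal (r' + e/2)" by (rule Limsup_bounded)
  then have "ereal r \<le> ereal (r' + e/2)" using L by simp
  then have "r \<le> r' + e/2" by simp
  then show False using e0 unfolding e_def by (simp add: field_simps)
qed



lemma zc_le: "zeros_count N \<le> N"
proof -
  have "zeros_count N \<le> card {1..N}" unfolding zeros_count_def by (rule card_mono) auto
  then show ?thesis by simp
qed

lemma Yb: "0 \<le> real (zeros_count N) / real N \<and> real (zeros_count N) / real N \<le> 1"
  using zc_le[of N] by (cases "N = 0") (auto simp: divide_le_eq_1)

lemma finite_lim:
  assumes "\<forall>N. 0 \<le> f N \<and> f N \<le> (1::real)"
  shows "\<exists>r. liminf (\<lambda>N. ereal (f N)) = ereal r" "\<exists>r. limsup (\<lambda>N. ereal (f N)) = ereal r"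
proof -
  have lo: "0 \<le> liminf (\<lambda>N. ereal (f N))" using assms by (intro Liminf_bounded) auto
  have hi: "limsup (\<lambda>N. ereal (f N)) \<le> 1" using assms by (intro Limsup_bounded) auto
  have m: "liminf (\<lambda>N. ereal (f N)) \<le> limsup (\<lambda>N. ereal (f N))" by (rule Liminf_le_Limsup) simp
  show "\<exists>r. liminf (\<lambda>N. ereal (f N)) = ereal r"
    using lo hi m by (cases "liminf (\<lambda>N. ereal (f N))") auto
  show "\<exists>r. limsup (\<lambda>N. ereal (f N)) = ereal r"
    using lo hi m by (cases "limsup (\<lambda>N. ereal (f N))") auto
qed

theorem theorem3p2:
  shows "liminf (\<lambda>N. ereal (real (d_count N) / real N)) \<ge> (5 * r_inf - 2) / 3
    \<and> limsup (\<lambda>N. ereal (real (d_count N) / real N)) \<ge> (5 * r_sup - 2) / 3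
    \<and> (r_sup > 2 / 5 \<longrightarrow> infinite {n. undesirable n})"
proof -
  define X where "X = (\<lambda>N. real (d_count N) / real N)"
  define Y where "Y = (\<lambda>N. real (zeros_count N) / real N)"
  have H: "3 * X N \<ge> 5 * Y N - 2 - 19 / real N" if "N > 0" for N
  proof -
    have "3 * real (d_count N) \<ge> 5 * real (zeros_count N) - 2 * real N - 19" by (rule count_ineq)
    then have "3 * real (d_count N) / real N \<ge> (5 * real (zeros_count N) - 2 * real N - 19) / real N"
      using that by (intro divide_right_mono) auto
    moreover have "(5 * real (zeros_count N) - 2 * real N - 19) / real N = 5 * Y N - 2 - 19 / real N"
      using that unfolding Y_def by (simp add: field_simps)
    moreover have "3 * real (d_count N) / real N = 3 * X N" unfolding X_def by simp
    ultimately show ?thesis by simp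
  qed
  obtain ri where ri: "r_inf = ereal ri" using finite_lim(1)[of Y] Yb unfolding r_inf_def Y_def by auto
  obtain rs where rs: "r_sup = ereal rs" using finite_lim(2)[of Y] Yb unfolding r_sup_def Y_def by auto
  have p1: "liminf (\<lambda>N. ereal (X N)) \<ge> (5 * r_inf - 2) / 3"
    using liminf_part[where X=X and Y=Y and r=ri, OF H] ri unfolding r_inf_def Y_def by simp
  have p2: "limsup (\<lambda>N. ereal (X N)) \<ge> (5 * r_sup - 2) / 3"
    using limsup_part[where X=X and Y=Y and r=rs, OF H] rs unfolding r_sup_def Y_def by simp
  have p3: "infinite {n. undesirable n}" if "r_sup > 2/5"
  proof
    assume fin: "finite {n. undesirable n}"
    define K where "K = card {n. undesirable n}"
    have rs0: "rs > 2/5" using that unfolding rs by simp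
    define c where "c = (5*rs-2)/3"
    have c0: "c > 0" using rs0 unfolding c_def by simp
    have "eventually (\<lambda>N. ereal (X N) \<le> ereal (c/2)) sequentially"
    proof -
      obtain n0 :: nat where n0: "real n0 > 2 * real K / c" using reals_Archimedean2 by blast
      have "eventually (\<lambda>N. N \<ge> Suc n0) sequentially" by (rule eventually_ge_at_top)
      then show ?thesis
      proof (rule eventually_mono)
        fix N assume N: "Suc n0 \<le> N"
        have NN: "real N > 2 * real K / c" using N n0 by linarith
        have Np: "real N > 0" using N by simp
        have dK: "d_count N \<le> K" unfolding d_count_def K_def using fin by (intro card_mono) auto
        have "2 * real K < c * real N" using NN c0 by (simp add: field_simps)
        then have "real K / real N \<le> c/2" using Np by (simp add: field_simps)
        moreover have "X N \<le> real K / real N" unfolding X_def using dK Np by (intro divide_right_mono) auto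
        ultimately have "X N \<le> c/2" by (rule order.trans[rotated])
        then show "ereal (X N) \<le> ereal (c/2)" by simp
      qed
    qed
    then have "limsup (\<lambda>N. ereal (X N)) \<le> ereal (c/2)" by (rule Limsup_bounded)
    moreover have "limsup (\<lambda>N. ereal (X N)) \<ge> ereal c" using p2 unfolding rs c_def by simp
    ultimately have "ereal c \<le> ereal (c/2)" by (rule order.trans[rotated])
    then show False using c0 by simp
  qed
  show ?thesis using p1 p2 p3 unfolding X_def by blast
qed


end
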